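(* Let $X=GL_n/B$ be the complete flag variety over a field $k$ of characteristic $0$, $d=n(n-1)/2=\dim X$, and identify $\Omega^*(X)\cong\mathbb{L}[x_1,\ldots,x_n]/S$. Let $c\in\Omega^*(X)$ be a homogeneous element of degree $l$ such that the product of $c$ with any non-constant monomial in $x_1,\ldots,x_n$ is zero. Then $c\in\mathbb{L}^{l-d}[pt]$, i.e. $c=a[pt]$ for some $a\in\mathbb{L}$ of degree $l-d$, where $[pt]$ is the class of a point.
   Context: $\mathbb{L}\cong\mathbb{Z}[a_1,a_2,\ldots]$ is the Lazard ring, graded with $\deg a_i=-i$; $x_i=c_1(L_i)$ where $L_i$ is the line bundle on $X$ with fiber $F^i/F^{i-1}$ at a flag $F$, $\deg x_i=1$; $S$ is the ideal generated by the symmetric polynomials of strictly positive polynomial degree, and the isomorphism sends $x_i$ to $c_1(L_i)$. *)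

theory Defs
  imports "HOL-Library.Poly_Mapping" "HOL-Combinatorics.Permutations"
begin

text \<open>Variables of the polynomial ring L[x_1,...,x_n] = Z[a_1,a_2,...][x_1,...,x_n]:
  A i stands for the Lazard generator a_i (i >= 1), X j for x_j = c_1(L_j) (1 <= j <= n).\<close>
datatype lvar = A nat | X nat

type_synonym mon = "lvar \<Rightarrow>\<^sub>0 nat"
type_synonym lpoly = "mon \<Rightarrow>\<^sub>0 int"

definition var_ok :: "nat \<Rightarrow> lvar \<Rightarrow> bool" where
  "var_ok n v = (case v of A i \<Rightarrow> 1 \<le> i | X j \<Rightarrow> 1 \<le> j \<and> j \<le> n)"

definition in_ring :: "nat \<Rightarrow> lpoly \<Rightarrow> bool" where
  "in_ring n p = (\<forall>m\<in>Poly_Mapping.keys p. \<forall>v\<in>Poly_Mapping.keys (m::mon). var_ok n v)"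

definition in_Laz :: "lpoly \<Rightarrow> bool" where
  "in_Laz p = (\<forall>m\<in>Poly_Mapping.keys p. \<forall>v\<in>Poly_Mapping.keys (m::mon). \<exists>i\<ge>1. v = A i)"

definition var_wt :: "lvar \<Rightarrow> int" where
  "var_wt v = (case v of A i \<Rightarrow> - int i | X j \<Rightarrow> 1)"

definition wdeg :: "mon \<Rightarrow> int" where
  "wdeg m = (\<Sum>v\<in>Poly_Mapping.keys m. int (Poly_Mapping.lookup m v) * var_wt v)"

definition homog :: "int \<Rightarrow> lpoly \<Rightarrow> bool" where
  "homog l p = (\<forall>m\<in>Poly_Mapping.keys p. wdeg m = l)"

definition xdeg :: "mon \<Rightarrow> nat" where
  "xdeg m = (\<Sum>v\<in>Poly_Mapping.keys m. (case v of X j \<Rightarrow> Poly_Mapping.lookup m v | A i \<Rightarrow> 0))"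

definition rv :: "(nat \<Rightarrow> nat) \<Rightarrow> lvar \<Rightarrow> lvar" where
  "rv \<sigma> v = (case v of A i \<Rightarrow> A i | X j \<Rightarrow> X (\<sigma> j))"

definition symmetric :: "nat \<Rightarrow> lpoly \<Rightarrow> bool" where
  "symmetric n p = (\<forall>\<sigma>. \<sigma> permutes {1..n} \<longrightarrow>
      (\<forall>m. Poly_Mapping.lookup p (Poly_Mapping.map_key (rv \<sigma>) m) = Poly_Mapping.lookup p m))"

definition sym_gens :: "nat \<Rightarrow> lpoly set" where
  "sym_gens n = {p. in_ring n p \<and> symmetric n p \<and> (\<forall>m\<in>Poly_Mapping.keys p. 0 < xdeg m)}"

definition S_ideal :: "nat \<Rightarrow> lpoly set" where
  "S_ideal n = {(\<Sum>i<(k::nat). q i * g i) | k q g.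
      \<forall>i<k. in_ring n (q i) \<and> g i \<in> sym_gens n}"

definition nonconst_xmon :: "nat \<Rightarrow> mon \<Rightarrow> bool" where
  "nonconst_xmon n m = (m \<noteq> 0 \<and> (\<forall>v\<in>Poly_Mapping.keys m. \<exists>j. 1 \<le> j \<and> j \<le> n \<and> v = X j))"

definition monom :: "mon \<Rightarrow> lpoly" where
  "monom m = Poly_Mapping.single m 1"

text \<open>representative of the class of a point: x_1^(n-1) x_2^(n-2) ... x_(n-1)
  (the point class equals this up to sign, which does not affect L.[pt])\<close>
definition pt :: "nat \<Rightarrow> lpoly" where
  "pt n = monom (\<Sum>j\<in>{1..n}. Poly_Mapping.single (X j) (n - j))"

end

theory Submission
  imports Defs "HOL-Computational_Algebra.Formal_Power_Series"
begin

unbundle fps_syntax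


definition rvm :: "(nat \<Rightarrow> nat) \<Rightarrow> mon \<Rightarrow> mon" where
  "rvm \<sigma> m = Poly_Mapping.map_key (rv \<sigma>) m"

definition act :: "(nat \<Rightarrow> nat) \<Rightarrow> lpoly \<Rightarrow> lpoly" where
  "act \<sigma> p = Poly_Mapping.map_key (rvm \<sigma>) p"

lemma inj_rv: "inj \<sigma> \<Longrightarrow> inj (rv \<sigma>)"
  unfolding inj_def rv_def by (auto split: lvar.splits)

lemma rv_comp: "rv \<sigma> (rv \<tau> v) = rv (\<sigma> \<circ> \<tau>) v"
  unfolding rv_def by (auto split: lvar.splits)

lemma lookup_rvm: "inj \<sigma> \<Longrightarrow> Poly_Mapping.lookup (rvm \<sigma> m) v = Poly_Mapping.lookup m (rv \<sigma> v)"
  unfolding rvm_def using inj_rv by (simp add: map_key.rep_eq)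

lemma rvm_plus: "inj \<sigma> \<Longrightarrow> rvm \<sigma> (a + b) = rvm \<sigma> a + rvm \<sigma> b"
  unfolding rvm_def using inj_rv by (simp add: map_key_plus)

lemma rvm_zero[simp]: "inj \<sigma> \<Longrightarrow> rvm \<sigma> 0 = 0"
  unfolding rvm_def using inj_rv by simp

lemma rvm_comp: "inj \<sigma> \<Longrightarrow> inj \<tau> \<Longrightarrow> rvm \<sigma> (rvm \<tau> m) = rvm (\<tau> \<circ> \<sigma>) m"
  by (rule poly_mapping_eqI) (simp add: lookup_rvm inj_compose rv_comp)

lemma rvm_id: "rvm id m = m"
  by (rule poly_mapping_eqI) (simp add: lookup_rvm rv_def split: lvar.splits)

lemma bij_rvm: assumes "bij \<sigma>" shows "bij (rvm \<sigma>)"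
proof -
  have i1: "inj \<sigma>" "inj (inv \<sigma>)" using assms bij_is_inj bij_imp_bij_inv by auto
  have "rvm (inv \<sigma>) (rvm \<sigma> m) = m" for m
    using rvm_comp[OF i1(2) i1(1)] assms surj_iff[THEN iffD1, OF bij_is_surj[OF assms]] by (simp add: rvm_id)
  moreover have "rvm \<sigma> (rvm (inv \<sigma>) m) = m" for m
    using rvm_comp[OF i1(1) i1(2)] assms by (simp add: bij_is_inj inv_o_cancel rvm_id)
  ultimately show ?thesis by (metis bij_betw_byWitness subset_UNIV top_greatest image_subsetI UNIV_I)
qed

lemma lookup_act: "bij \<sigma> \<Longrightarrow> Poly_Mapping.lookup (act \<sigma> p) m = Poly_Mapping.lookup p (rvm \<sigma> m)"
  unfolding act_def by (simp add: map_key.rep_eq[OF bij_is_inj[OF bij_rvm]])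

lemma act_plus: "bij \<sigma> \<Longrightarrow> act \<sigma> (p + q) = act \<sigma> p + act \<sigma> q"
  by (rule poly_mapping_eqI) (simp add: lookup_act lookup_add)

lemma act_mult: assumes b: "bij \<sigma>" shows "act \<sigma> (p * q) = act \<sigma> p * act \<sigma> q"
proof (rule poly_mapping_eqI)
  fix k
  let ?g = "rvm \<sigma>"
  have bg: "bij ?g" using bij_rvm[OF b] .
  have ia: "inj \<sigma>" using b bij_is_inj by auto
  have addg: "?g a + ?g b = ?g (a + b)" for a b using rvm_plus[OF ia] by simp
  have inner: "(\<Sum>r. Poly_Mapping.lookup q r when ?g k = ?g l + r) =
      (\<Sum>r. Poly_Mapping.lookup q (?g r) when k = l + r)" for l
  proof (rule Sum_any.reindex_cong[OF bg])
    show "(\<lambda>r. Poly_Mapping.lookup q r when ?g k = ?g l + r) \<circ> ?g = (\<lambda>r. Poly_Mapping.lookup q (?g r) when k = l + r)"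
      using bij_is_inj[OF bg] by (auto simp: fun_eq_iff addg inj_eq)
  qed
  have "Poly_Mapping.lookup (act \<sigma> (p * q)) k = (\<Sum>l. Poly_Mapping.lookup p l * (\<Sum>r. Poly_Mapping.lookup q r when ?g k = l + r))"
    by (simp add: lookup_act[OF b] lookup_mult)
  also have "\<dots> = (\<Sum>l. Poly_Mapping.lookup p (?g l) * (\<Sum>r. Poly_Mapping.lookup q r when ?g k = ?g l + r))"
    by (rule Sum_any.reindex_cong[OF bg]) (simp add: o_def)
  also have "\<dots> = Poly_Mapping.lookup (act \<sigma> p * act \<sigma> q) k"
    by (simp add: lookup_act[OF b] lookup_mult inner)
  finally show "Poly_Mapping.lookup (act \<sigma> (p * q)) k = Poly_Mapping.lookup (act \<sigma> p * act \<sigma> q) k" .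
qed


definition allkeys :: "(mon \<Rightarrow> bool) \<Rightarrow> lpoly \<Rightarrow> bool" where
  "allkeys P p = (\<forall>m\<in>Poly_Mapping.keys p. P m)"

lemma allkeys_0[simp]: "allkeys P 0" by (simp add: allkeys_def)
lemma allkeys_add: "allkeys P p \<Longrightarrow> allkeys P q \<Longrightarrow> allkeys P (p + q)"
  unfolding allkeys_def using Poly_Mapping.keys_add[of p q] by blast
lemma allkeys_uminus: "allkeys P p \<Longrightarrow> allkeys P (- p)"
  unfolding allkeys_def by (simp only: keys_minus)
lemma allkeys_diff: "allkeys P p \<Longrightarrow> allkeys P q \<Longrightarrow> allkeys P (p - q)"
  using allkeys_add[of P p "-q"] allkeys_uminus[of P q] by (simp only: diff_conv_add_uminus)
lemma allkeys_sum: "(\<And>i. i \<in> I \<Longrightarrow> allkeys P (f i)) \<Longrightarrow> allkeys P (sum f I)"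
  by (induction I rule: infinite_finite_induct) (simp_all add: allkeys_add)
lemma allkeys_mult:
  assumes "\<And>a b. P1 a \<Longrightarrow> P2 b \<Longrightarrow> P3 (a + b)" "allkeys P1 p" "allkeys P2 q"
  shows "allkeys P3 (p * q)"
  unfolding allkeys_def
proof
  fix m assume "m \<in> Poly_Mapping.keys (p * q)"
  then obtain a b where "m = a + b" "a \<in> Poly_Mapping.keys p" "b \<in> Poly_Mapping.keys q"
    using Poly_Mapping.keys_mult[of p q] by auto
  then show "P3 m" using assms unfolding allkeys_def by auto
qed
lemma allkeys_single: "P m \<Longrightarrow> allkeys P (Poly_Mapping.single m c)"
  by (simp add: allkeys_def)
lemma allkeys_of_int: "P 0 \<Longrightarrow> allkeys P (of_int c)"
  using allkeys_single[of P 0 "of_int c"] by (simp only: single_of_int)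
lemma allkeys_mono: "allkeys P p \<Longrightarrow> (\<And>m. P m \<Longrightarrow> Q m) \<Longrightarrow> allkeys Q p"
  by (auto simp: allkeys_def)

lemma in_ring_allkeys: "in_ring n p = allkeys (\<lambda>m. \<forall>v\<in>Poly_Mapping.keys m. var_ok n v) p"
  by (simp add: in_ring_def allkeys_def)
lemma homog_allkeys: "homog l p = allkeys (\<lambda>m. wdeg m = l) p"
  by (simp add: homog_def allkeys_def)

lemma keys_add_mon: "Poly_Mapping.keys ((a::mon) + b) = Poly_Mapping.keys a \<union> Poly_Mapping.keys b"
  by (auto simp: in_keys_iff lookup_add)

lemma in_ring_add: "in_ring n p \<Longrightarrow> in_ring n q \<Longrightarrow> in_ring n (p + q)"
  by (simp add: in_ring_allkeys allkeys_add)
lemma in_ring_diff: "in_ring n p \<Longrightarrow> in_ring n q \<Longrightarrow> in_ring n (p - q)"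
  by (simp add: in_ring_allkeys allkeys_diff)
lemma in_ring_uminus: "in_ring n p \<Longrightarrow> in_ring n (- p)"
  by (simp add: in_ring_allkeys allkeys_uminus)
lemma in_ring_mult: "in_ring n p \<Longrightarrow> in_ring n q \<Longrightarrow> in_ring n (p * q)"
  unfolding in_ring_allkeys
  by (rule allkeys_mult[of "\<lambda>m. \<forall>v\<in>Poly_Mapping.keys m. var_ok n v" "\<lambda>m. \<forall>v\<in>Poly_Mapping.keys m. var_ok n v"])
     (auto simp: keys_add_mon)
lemma in_ring_sum: "(\<And>i. i \<in> I \<Longrightarrow> in_ring n (f i)) \<Longrightarrow> in_ring n (sum f I)"
  by (simp add: in_ring_allkeys allkeys_sum)
lemma in_ring_of_int: "in_ring n (of_int c)"
  by (simp add: in_ring_allkeys allkeys_of_int)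
lemma in_ring_one: "in_ring n 1"
  using in_ring_of_int[of n 1] by simp
lemma in_ring_prod: "(\<And>i. i \<in> I \<Longrightarrow> in_ring n (f i)) \<Longrightarrow> in_ring n (prod f I)"
  by (induction I rule: infinite_finite_induct) (auto intro: in_ring_mult in_ring_one)
lemma in_ring_single: "(\<And>v. v \<in> Poly_Mapping.keys m \<Longrightarrow> var_ok n v) \<Longrightarrow> in_ring n (Poly_Mapping.single m c)"
  by (simp add: in_ring_allkeys allkeys_single)
lemma in_ring_power: "in_ring n p \<Longrightarrow> in_ring n (p ^ k)"
  by (induction k) (auto intro: in_ring_mult in_ring_one)


definition xw :: "lvar \<Rightarrow> nat" where "xw v = (case v of X j \<Rightarrow> 1 | A i \<Rightarrow> 0)"

lemma xdeg_alt: "xdeg m = (\<Sum>v\<in>Poly_Mapping.keys m. Poly_Mapping.lookup m v * xw v)"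
  unfolding xdeg_def xw_def by (rule sum.cong) (auto split: lvar.splits)

lemma xdeg_superset:
  assumes "finite F" "Poly_Mapping.keys m \<subseteq> F"
  shows "xdeg m = (\<Sum>v\<in>F. Poly_Mapping.lookup m v * xw v)"
  unfolding xdeg_alt
  by (rule sum.mono_neutral_left[OF assms]) (auto simp: in_keys_iff)

lemma xdeg_add: "xdeg (a + b) = xdeg a + xdeg b"
proof -
  let ?F = "Poly_Mapping.keys a \<union> Poly_Mapping.keys b"
  have f: "finite ?F" by simp
  show ?thesis
    using xdeg_superset[OF f, of "a+b"] xdeg_superset[OF f, of a] xdeg_superset[OF f, of b]
    by (simp add: keys_add_mon lookup_add sum.distrib[symmetric] algebra_simps)
qed

lemma xdeg_zero[simp]: "xdeg 0 = 0" by (simp add: xdeg_def)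

lemma wdeg_superset:
  assumes "finite F" "Poly_Mapping.keys m \<subseteq> F"
  shows "wdeg m = (\<Sum>v\<in>F. int (Poly_Mapping.lookup m v) * var_wt v)"
  unfolding wdeg_def
  by (rule sum.mono_neutral_left[OF assms]) (auto simp: in_keys_iff)

lemma wdeg_add: "wdeg (a + b) = wdeg a + wdeg b"
proof -
  let ?F = "Poly_Mapping.keys a \<union> Poly_Mapping.keys b"
  have f: "finite ?F" by simp
  show ?thesis
    using wdeg_superset[OF f, of "a+b"] wdeg_superset[OF f, of a] wdeg_superset[OF f, of b]
    by (simp add: keys_add_mon lookup_add sum.distrib[symmetric] algebra_simps)
qed

lemma wdeg_zero[simp]: "wdeg 0 = 0" by (simp add: wdeg_def)

lemma homog_add: "homog l p \<Longrightarrow> homog l q \<Longrightarrow> homog l (p + q)"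
  by (simp add: homog_allkeys allkeys_add)
lemma homog_diff: "homog l p \<Longrightarrow> homog l q \<Longrightarrow> homog l (p - q)"
  by (simp add: homog_allkeys allkeys_diff)
lemma homog_sum: "(\<And>i. i \<in> I \<Longrightarrow> homog l (f i)) \<Longrightarrow> homog l (sum f I)"
  by (simp add: homog_allkeys allkeys_sum)
lemma homog_mult: "homog l1 p \<Longrightarrow> homog l2 q \<Longrightarrow> homog (l1 + l2) (p * q)"
  unfolding homog_allkeys by (erule allkeys_mult[rotated]) (auto simp: wdeg_add)
lemma homog_of_int: "homog 0 (of_int c)"
  by (simp add: homog_allkeys allkeys_of_int)
lemma homog_0[simp]: "homog l 0" by (simp add: homog_def)

lemma S_gen: "g \<in> sym_gens n \<Longrightarrow> g \<in> S_ideal n"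
  unfolding S_ideal_def
  by (rule CollectI, rule exI[of _ 1], rule exI[of _ "\<lambda>_. 1"], rule exI[of _ "\<lambda>_. g"])
     (simp add: in_ring_one)

lemma S_zero: "0 \<in> S_ideal n"
  unfolding S_ideal_def by (rule CollectI, rule exI[of _ 0]) simp

lemma sum_lessThan_split: "(\<Sum>i<a+b. h i) = (\<Sum>i<a. h i) + (\<Sum>i<b. h (a+i))"
  for h :: "nat \<Rightarrow> 'a::comm_monoid_add"
  by (induct b) (simp_all add: add.assoc)

lemma S_add: assumes "p \<in> S_ideal n" "r \<in> S_ideal n" shows "p + r \<in> S_ideal n"
proof -
  from assms(1) have "\<exists>k1 q1 g1. p = (\<Sum>i<(k1::nat). q1 i * g1 i) \<and> (\<forall>i<k1. in_ring n (q1 i) \<and> g1 i \<in> sym_gens n)"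
    unfolding S_ideal_def mem_Collect_eq by simp
  then obtain k1 q1 g1 where p: "p = (\<Sum>i<(k1::nat). q1 i * g1 i)" "\<forall>i<k1. in_ring n (q1 i) \<and> g1 i \<in> sym_gens n"
    by blast
  from assms(2) have "\<exists>k2 q2 g2. r = (\<Sum>i<(k2::nat). q2 i * g2 i) \<and> (\<forall>i<k2. in_ring n (q2 i) \<and> g2 i \<in> sym_gens n)"
    unfolding S_ideal_def mem_Collect_eq by simp
  then obtain k2 q2 g2 where r: "r = (\<Sum>i<(k2::nat). q2 i * g2 i)" "\<forall>i<k2. in_ring n (q2 i) \<and> g2 i \<in> sym_gens n"
    by blast
  define q where "q i = (if i < k1 then q1 i else q2 (i - k1))" for i
  define g where "g i = (if i < k1 then g1 i else g2 (i - k1))" for i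
  have "(\<Sum>i<k1+k2. q i * g i) = (\<Sum>i<k1. q i * g i) + (\<Sum>i<k2. q (k1 + i) * g (k1 + i))"
    by (rule sum_lessThan_split)
  also have "\<dots> = p + r" by (simp add: p r q_def g_def)
  finally have e: "p + r = (\<Sum>i<k1+k2. q i * g i)" by simp
  have "\<forall>i<k1+k2. in_ring n (q i) \<and> g i \<in> sym_gens n"
    using p(2) r(2) by (auto simp: q_def g_def)
  with e show ?thesis unfolding S_ideal_def by blast
qed

lemma S_mult: assumes "p \<in> S_ideal n" "in_ring n r" shows "r * p \<in> S_ideal n"
proof -
  from assms(1) have "\<exists>k q g. p = (\<Sum>i<(k::nat). q i * g i) \<and> (\<forall>i<k. in_ring n (q i) \<and> g i \<in> sym_gens n)"
    unfolding S_ideal_def mem_Collect_eq by simp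
  then obtain k q g where p: "p = (\<Sum>i<(k::nat). q i * g i)" "\<forall>i<k. in_ring n (q i) \<and> g i \<in> sym_gens n"
    by blast
  have "r * p = (\<Sum>i<k. (r * q i) * g i)" by (simp add: p sum_distrib_left mult.assoc)
  moreover have "\<forall>i<k. in_ring n (r * q i) \<and> g i \<in> sym_gens n" using p(2) assms(2) in_ring_mult by blast
  ultimately show ?thesis unfolding S_ideal_def mem_Collect_eq by (intro exI[of _ k] exI[of _ "\<lambda>i. r * q i"] exI[of _ g] conjI) simp_all
qed

lemma S_uminus: "p \<in> S_ideal n \<Longrightarrow> - p \<in> S_ideal n"
  using S_mult[of p n "-1"] in_ring_uminus[OF in_ring_one] by simp

lemma S_diff: "p \<in> S_ideal n \<Longrightarrow> r \<in> S_ideal n \<Longrightarrow> p - r \<in> S_ideal n"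
  using S_add[of p n "-r"] S_uminus by simp

lemma S_sum: "(\<And>i. i \<in> I \<Longrightarrow> f i \<in> S_ideal n) \<Longrightarrow> sum f I \<in> S_ideal n"
  by (induction I rule: infinite_finite_induct) (auto intro: S_add S_zero)

lemma S_mult_right: "p \<in> S_ideal n \<Longrightarrow> in_ring n r \<Longrightarrow> p * r \<in> S_ideal n"
  using S_mult by (simp add: mult.commute)



definition xv :: "nat \<Rightarrow> lpoly" where
  "xv j = Poly_Mapping.single (Poly_Mapping.single (X j) 1) 1"

definition Lf :: "nat \<Rightarrow> lpoly fps" where
  "Lf i = 1 - fps_const (xv i) * fps_X"

definition Gs :: "nat \<Rightarrow> lpoly fps" where
  "Gs i = Abs_fps (\<lambda>t. xv i ^ t)"

definition EE :: "nat \<Rightarrow> lpoly fps" where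
  "EE r = (\<Prod>i\<in>{1..r}. Lf i)"

definition HH :: "nat \<Rightarrow> lpoly fps" where
  "HH k = (\<Prod>i\<in>{1..k}. Gs i)"

definition hh :: "nat \<Rightarrow> nat \<Rightarrow> lpoly" where "hh k d = HH k $ d"
definition ee :: "nat \<Rightarrow> nat \<Rightarrow> lpoly" where "ee r j = EE r $ j"

lemma Lf_nth: "Lf i $ t = (if t = 0 then 1 else if t = 1 then - xv i else 0)"
  by (simp add: Lf_def)

lemma Gs_Lf: "Gs i * Lf i = 1"
proof (rule fps_ext)
  fix t
  have "Gs i * Lf i = Gs i - fps_const (xv i) * (fps_X * Gs i)"
    by (simp add: Lf_def algebra_simps)
  then show "(Gs i * Lf i) $ t = 1 $ t"
    by (cases t) (simp_all add: Gs_def)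
qed

lemma HH_EE: "HH k * EE k = 1"
  unfolding HH_def EE_def prod.distrib[symmetric] by (simp add: Gs_Lf)

lemma EE_split: "k \<le> n \<Longrightarrow> EE n = EE k * (\<Prod>i\<in>{k+1..n}. Lf i)"
proof -
  assume "k \<le> n"
  then have "{1..n} = {1..k} \<union> {k+1..n}" by auto
  moreover have "{1..k} \<inter> {k+1..n} = {}" by auto
  ultimately show ?thesis unfolding EE_def by (simp add: prod.union_disjoint)
qed

lemma prod_Lf_nth: "finite B \<Longrightarrow> card B < t \<Longrightarrow> (\<Prod>i\<in>B. Lf i) $ t = 0"
proof (induction B arbitrary: t rule: finite_induct)
  case empty then show ?case by simp
next
  case (insert x F)
  have e: "Lf x * (\<Prod>i\<in>F. Lf i) = (\<Prod>i\<in>F. Lf i) - fps_const (xv x) * (fps_X * (\<Prod>i\<in>F. Lf i))"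
    by (simp add: Lf_def algebra_simps)
  from insert show ?case
    by (cases t) (simp_all add: e)
qed

lemma hh_rel:
  assumes "k \<le> n" "n - k < d"
  shows "(\<Sum>j=0..d. ee n j * hh k (d - j)) = 0"
proof -
  have "HH k * EE n = (\<Prod>i\<in>{k+1..n}. Lf i)"
    using EE_split[OF assms(1)] HH_EE[of k] by (metis mult.assoc mult_1)
  then have "(EE n * HH k) $ d = 0"
    using prod_Lf_nth[of "{k+1..n}" d] assms by (simp add: mult.commute)
  then show ?thesis by (simp add: fps_mult_nth ee_def hh_def)
qed

lemma fps_prod_nth0: "(\<Prod>i\<in>B. f i) $ 0 = (\<Prod>i\<in>B. f i $ 0)"
  for f :: "nat \<Rightarrow> lpoly fps"
  by (induction B rule: infinite_finite_induct) simp_all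

lemma ee_0: "ee n 0 = 1"
  by (simp add: ee_def EE_def fps_prod_nth0 Lf_nth)

lemma hh_0: "hh k 0 = 1"
  by (simp add: hh_def HH_def fps_prod_nth0 Gs_def)

lemma hh_Suc: "hh (Suc k) d = (\<Sum>i=0..d. hh k i * xv (Suc k) ^ (d - i))"
proof -
  have "HH (Suc k) = HH k * Gs (Suc k)"
    unfolding HH_def by (simp add: prod.nat_ivl_Suc' mult.commute)
  then show ?thesis by (simp add: hh_def fps_mult_nth Gs_def)
qed

lemma hh_expr:
  assumes "k \<le> n" "n - k < d"
  shows "hh k d = - (\<Sum>j=1..d. ee n j * hh k (d - j))"
proof -
  have "(\<Sum>j=0..d. ee n j * hh k (d - j)) = ee n 0 * hh k d + (\<Sum>j=1..d. ee n j * hh k (d - j))"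
    by (simp add: sum.atLeast_Suc_atMost)
  with hh_rel[OF assms] show ?thesis by (simp add: ee_0 eq_neg_iff_add_eq_0 add.commute)
qed



definition xmon :: "nat \<Rightarrow> nat \<Rightarrow> mon \<Rightarrow> bool" where
  "xmon k d m = ((\<forall>v\<in>Poly_Mapping.keys m. \<exists>j. 1 \<le> j \<and> j \<le> k \<and> v = X j) \<and> xdeg m = d)"

lemma xmon_add: "xmon k a m1 \<Longrightarrow> xmon k b m2 \<Longrightarrow> xmon k (a + b) (m1 + m2)"
  unfolding xmon_def by (auto simp: keys_add_mon xdeg_add)

lemma xmon_0: "xmon k 0 0"
  by (simp add: xmon_def)

lemma xdeg_single: "xdeg (Poly_Mapping.single (X i) t) = t"
  by (simp add: xdeg_alt xw_def)

lemma xv_power: "xv i ^ t = Poly_Mapping.single (Poly_Mapping.single (X i) t) 1"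
  by (induction t) (simp_all add: xv_def mult_single single_add[symmetric] add.commute)

lemma allkeys_xv_power: "1 \<le> i \<Longrightarrow> i \<le> k \<Longrightarrow> allkeys (xmon k t) (xv i ^ t)"
  unfolding xv_power by (rule allkeys_single) (auto simp: xmon_def xdeg_single)

lemma allkeys_one_nth: "allkeys (xmon k t) ((1::lpoly fps) $ t)"
  using allkeys_single[of "xmon k 0" 0 1] by (simp add: xmon_0)

lemma fps_mult_allkeys:
  assumes "\<And>t. allkeys (xmon k t) (F $ t)" "\<And>t. allkeys (xmon k t) (G $ t)"
  shows "allkeys (xmon k t) ((F * G) $ t)"
  unfolding fps_mult_nth
proof (rule allkeys_sum)
  fix i assume "i \<in> {0..t}"
  then have e: "i + (t - i) = t" by simp
  show "allkeys (xmon k t) (F $ i * G $ (t - i))"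
    by (rule allkeys_mult[OF _ assms(1) assms(2)]) (drule (1) xmon_add, simp add: e)
qed

lemma fps_prod_allkeys:
  assumes "\<And>i t. i \<in> B \<Longrightarrow> allkeys (xmon k t) (f i $ t)"
  shows "allkeys (xmon k t) ((\<Prod>i\<in>B. f i) $ t)"
  using assms
proof (induction B arbitrary: t rule: infinite_finite_induct)
  case (infinite B) then show ?case using allkeys_one_nth[of k t] by simp
next
  case empty then show ?case using allkeys_one_nth[of k t] by simp
next
  case (insert x F) then show ?case by (simp add: fps_mult_allkeys)
qed

lemma Lf_allkeys: "1 \<le> i \<Longrightarrow> i \<le> k \<Longrightarrow> allkeys (xmon k t) (Lf i $ t)"
  using allkeys_xv_power[of i k 1] allkeys_uminus[of "xmon k 1" "xv i"] allkeys_one_nth[of k 0]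
  by (simp add: Lf_nth)

lemma Gs_allkeys: "1 \<le> i \<Longrightarrow> i \<le> k \<Longrightarrow> allkeys (xmon k t) (Gs i $ t)"
  by (simp add: Gs_def allkeys_xv_power)

lemma ee_allkeys: "allkeys (xmon r t) (ee r t)"
  unfolding ee_def EE_def by (rule fps_prod_allkeys) (simp add: Lf_allkeys)

lemma hh_allkeys: "allkeys (xmon k t) (hh k t)"
  unfolding hh_def HH_def by (rule fps_prod_allkeys) (simp add: Gs_allkeys)

lemma xmon_in_ring: "allkeys (xmon k t) p \<Longrightarrow> k \<le> n \<Longrightarrow> in_ring n p"
  unfolding in_ring_allkeys
  by (erule allkeys_mono) (auto simp: xmon_def var_ok_def)

lemma act_zero[simp]: "bij \<sigma> \<Longrightarrow> act \<sigma> 0 = 0"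
  by (rule poly_mapping_eqI) (simp add: lookup_act)

lemma act_sum: "bij \<sigma> \<Longrightarrow> act \<sigma> (sum f B) = (\<Sum>i\<in>B. act \<sigma> (f i))"
  by (induction B rule: infinite_finite_induct) (simp_all add: act_plus)

lemma act_uminus: "bij \<sigma> \<Longrightarrow> act \<sigma> (- p) = - act \<sigma> p"
  by (rule poly_mapping_eqI) (simp add: lookup_act)

lemma rvm_eq0: assumes b: "bij \<sigma>" shows "rvm \<sigma> m = 0 \<longleftrightarrow> m = 0"
proof -
  have i: "inj (rvm \<sigma>)" using bij_is_inj[OF bij_rvm[OF b]] .
  have z: "rvm \<sigma> 0 = 0" using rvm_zero bij_is_inj[OF b] by blast
  show ?thesis using inj_eq[OF i, of m 0] z by simp
qed

lemma act_one: "bij \<sigma> \<Longrightarrow> act \<sigma> 1 = 1"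
  by (rule poly_mapping_eqI) (simp add: lookup_act lookup_one rvm_eq0 when_def)

lemma act_xv: assumes "bij \<sigma>" shows "act \<sigma> (xv i) = xv (\<sigma> i)"
proof -
  have i: "inj \<sigma>" using assms bij_is_inj by auto
  have r: "rvm \<sigma> (Poly_Mapping.single (X (\<sigma> i)) 1) = Poly_Mapping.single (X i) 1"
    by (rule poly_mapping_eqI) (simp add: lookup_rvm[OF i] lookup_single when_def rv_def inj_eq[OF i] split: lvar.splits)
  have e: "rvm \<sigma> m = Poly_Mapping.single (X i) 1 \<longleftrightarrow> m = Poly_Mapping.single (X (\<sigma> i)) 1" for m
    using inj_eq[OF bij_is_inj[OF bij_rvm[OF assms]], of m "Poly_Mapping.single (X (\<sigma> i)) 1"] r by simp
  show ?thesis
  proof (rule poly_mapping_eqI)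
    fix m
    show "Poly_Mapping.lookup (act \<sigma> (xv i)) m = Poly_Mapping.lookup (xv (\<sigma> i)) m"
      unfolding lookup_act[OF assms] xv_def lookup_single when_def
      using e[of m] by auto
  qed
qed

definition fact :: "(nat \<Rightarrow> nat) \<Rightarrow> lpoly fps \<Rightarrow> lpoly fps" where
  "fact \<sigma> F = Abs_fps (\<lambda>t. act \<sigma> (F $ t))"

lemma fact_nth: "fact \<sigma> F $ t = act \<sigma> (F $ t)"
  by (simp add: fact_def)

lemma fact_mult: "bij \<sigma> \<Longrightarrow> fact \<sigma> (F * G) = fact \<sigma> F * fact \<sigma> G"
  by (rule fps_ext) (simp add: fact_nth fps_mult_nth act_sum act_mult)

lemma fact_one: "bij \<sigma> \<Longrightarrow> fact \<sigma> 1 = 1"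
  by (rule fps_ext) (simp add: fact_nth act_one)

lemma fact_prod: "bij \<sigma> \<Longrightarrow> fact \<sigma> (\<Prod>i\<in>B. f i) = (\<Prod>i\<in>B. fact \<sigma> (f i))"
  by (induction B rule: infinite_finite_induct) (simp_all add: fact_one fact_mult)

lemma fact_Lf: "bij \<sigma> \<Longrightarrow> fact \<sigma> (Lf i) = Lf (\<sigma> i)"
  by (rule fps_ext) (simp add: fact_nth Lf_nth act_one act_uminus act_xv)

lemma ee_act: assumes "\<sigma> permutes {1..n}" shows "act \<sigma> (ee n j) = ee n j"
proof -
  have b: "bij \<sigma>" using assms permutes_bij by auto
  have "fact \<sigma> (EE n) = (\<Prod>i\<in>{1..n}. Lf (\<sigma> i))"
    unfolding EE_def by (simp add: fact_prod[OF b] fact_Lf[OF b])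
  also have "\<dots> = EE n"
    unfolding EE_def using prod.permute[OF assms, of Lf] by (simp add: o_def)
  finally show ?thesis by (metis ee_def fact_nth)
qed

lemma symmetric_act: "symmetric n p \<longleftrightarrow> (\<forall>\<sigma>. \<sigma> permutes {1..n} \<longrightarrow> act \<sigma> p = p)"
proof -
  have "act \<sigma> p = p \<longleftrightarrow> (\<forall>m. Poly_Mapping.lookup p (Poly_Mapping.map_key (rv \<sigma>) m) = Poly_Mapping.lookup p m)"
    if "\<sigma> permutes {1..n}" for \<sigma>
  proof -
    have "act \<sigma> p = p \<longleftrightarrow> (\<forall>m. Poly_Mapping.lookup (act \<sigma> p) m = Poly_Mapping.lookup p m)"
      by (auto intro: poly_mapping_eqI)
    then show ?thesis using lookup_act[OF permutes_bij[OF that]] by (simp add: rvm_def)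
  qed
  then show ?thesis unfolding symmetric_def by blast
qed

lemma ee_sym: "1 \<le> j \<Longrightarrow> ee n j \<in> sym_gens n"
  unfolding sym_gens_def
proof (intro CollectI conjI)
  show "in_ring n (ee n j)" using xmon_in_ring[OF ee_allkeys order_refl] .
  show "symmetric n (ee n j)" unfolding symmetric_act using ee_act by blast
  assume "1 \<le> j"
  then show "\<forall>m\<in>Poly_Mapping.keys (ee n j). 0 < xdeg m"
    using ee_allkeys[of n j] by (auto simp: allkeys_def xmon_def)
qed

lemma hh_in_S:
  assumes "k \<le> n" "n - k < d"
  shows "hh k d \<in> S_ideal n"
proof -
  have "(\<Sum>j=1..d. ee n j * hh k (d - j)) \<in> S_ideal n"
  proof (rule S_sum)
    fix j assume "j \<in> {1..d}"
    then have j: "1 \<le> j" by simp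
    show "ee n j * hh k (d - j) \<in> S_ideal n"
      using S_mult_right[OF S_gen[OF ee_sym[OF j]] xmon_in_ring[OF hh_allkeys assms(1)]] .
  qed
  then show ?thesis using hh_expr[OF assms] S_uminus by simp
qed



definition okm :: "nat \<Rightarrow> mon \<Rightarrow> bool" where
  "okm n m = (\<forall>v\<in>Poly_Mapping.keys m. var_ok n v)"

definition reduced :: "nat \<Rightarrow> lpoly \<Rightarrow> bool" where
  "reduced n q = allkeys (\<lambda>m. \<forall>j. Poly_Mapping.lookup m (X j) \<le> n - j) q"

definition Good :: "nat \<Rightarrow> int \<Rightarrow> lpoly \<Rightarrow> bool" where
  "Good n w p = (\<exists>q. in_ring n q \<and> homog w q \<and> reduced n q \<and> p - q \<in> S_ideal n)"

lemma Good_0: "Good n w 0"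
  unfolding Good_def reduced_def by (rule exI[of _ 0]) (simp add: in_ring_def S_zero)

lemma Good_add: assumes "Good n w p" "Good n w r" shows "Good n w (p + r)"
proof -
  obtain q1 where q1: "in_ring n q1" "homog w q1" "reduced n q1" "p - q1 \<in> S_ideal n"
    using assms(1) unfolding Good_def by blast
  obtain q2 where q2: "in_ring n q2" "homog w q2" "reduced n q2" "r - q2 \<in> S_ideal n"
    using assms(2) unfolding Good_def by blast
  have e: "p + r - (q1 + q2) = (p - q1) + (r - q2)" by (simp add: algebra_simps)
  have "p + r - (q1 + q2) \<in> S_ideal n" unfolding e by (rule S_add[OF q1(4) q2(4)])
  moreover have "reduced n (q1 + q2)" using q1(3) q2(3) unfolding reduced_def by (rule allkeys_add)
  ultimately show ?thesis unfolding Good_def using in_ring_add[OF q1(1) q2(1)] homog_add[OF q1(2) q2(2)] by blast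
qed

lemma allkeys_of_int_mult: "allkeys P q \<Longrightarrow> allkeys P (of_int c * q)"
  by (rule allkeys_mult[of "\<lambda>m. m = 0" P P]) (simp_all add: allkeys_of_int)

lemma Good_smult: assumes "Good n w p" shows "Good n w (of_int c * p)"
proof -
  obtain q where q: "in_ring n q" "homog w q" "reduced n q" "p - q \<in> S_ideal n"
    using assms(1) unfolding Good_def by blast
  have "of_int c * p - of_int c * q = of_int c * (p - q)" by (simp add: algebra_simps)
  then have "of_int c * p - of_int c * q \<in> S_ideal n" using S_mult[OF q(4) in_ring_of_int] by simp
  moreover have "reduced n (of_int c * q)" using q(3) unfolding reduced_def by (rule allkeys_of_int_mult)
  moreover have "homog w (of_int c * q)" using homog_mult[OF homog_of_int q(2)] by simp
  ultimately show ?thesis unfolding Good_def using in_ring_mult[OF in_ring_of_int q(1)] by blast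
qed

lemma Good_uminus: "Good n w p \<Longrightarrow> Good n w (- p)"
  using Good_smult[of n w p "-1"] by simp

lemma Good_sum: "(\<And>i. i \<in> B \<Longrightarrow> Good n w (f i)) \<Longrightarrow> Good n w (sum f B)"
  by (induction B rule: infinite_finite_induct) (simp_all add: Good_0 Good_add)

lemma Good_S: assumes "Good n w p" "p' - p \<in> S_ideal n" shows "Good n w p'"
proof -
  obtain q where q: "in_ring n q" "homog w q" "reduced n q" "p - q \<in> S_ideal n"
    using assms(1) unfolding Good_def by blast
  have "p' - q = (p' - p) + (p - q)" by simp
  then have "p' - q \<in> S_ideal n" using S_add[OF assms(2) q(4)] by simp
  then show ?thesis unfolding Good_def using q by blast
qed

lemma monom_mult: "monom a * monom b = monom (a + b)"
  by (simp add: monom_def mult_single)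

lemma single_monom: "Poly_Mapping.single m c = of_int c * monom m"
proof -
  have "Poly_Mapping.single (0::mon) (of_int c::int) = (of_int c :: lpoly)" by (rule single_of_int)
  then have "of_int c = Poly_Mapping.single (0::mon) c" by simp
  then have "of_int c * monom m = Poly_Mapping.single 0 c * Poly_Mapping.single m 1"
    by (simp add: monom_def)
  also have "\<dots> = Poly_Mapping.single m c" by (simp add: mult_single)
  finally show ?thesis by simp
qed

lemma poly_decomp: "p = (\<Sum>m\<in>Poly_Mapping.keys p. of_int (Poly_Mapping.lookup p m) * monom m)"
proof (rule poly_mapping_eqI)
  fix k
  have "(\<Sum>m\<in>Poly_Mapping.keys p. Poly_Mapping.lookup (of_int (Poly_Mapping.lookup p m) * monom m) k)
      = (\<Sum>m\<in>Poly_Mapping.keys p. if k = m then Poly_Mapping.lookup p m else 0)"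
    by (rule sum.cong) (simp_all add: single_monom[symmetric] lookup_single when_def)
  also have "\<dots> = Poly_Mapping.lookup p k"
    by (simp add: in_keys_iff)
  finally show "Poly_Mapping.lookup p k = Poly_Mapping.lookup (\<Sum>m\<in>Poly_Mapping.keys p. of_int (Poly_Mapping.lookup p m) * monom m) k"
    by (simp add: lookup_sum)
qed

lemma xv_power_monom: "xv k ^ t = monom (Poly_Mapping.single (X k) t)"
  by (simp add: xv_power monom_def)

lemma okm_lookup0: assumes "okm n m" "j = 0 \<or> n < j" shows "Poly_Mapping.lookup m (X j) = 0"
proof (rule ccontr)
  assume "Poly_Mapping.lookup m (X j) \<noteq> 0"
  then have "X j \<in> Poly_Mapping.keys m" by (simp add: in_keys_iff)
  then have "var_ok n (X j)" using assms(1) okm_def by blast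
  then show False using assms(2) var_ok_def by auto
qed

lemma wdeg_single_X: "wdeg (Poly_Mapping.single (X k) t) = int t"
  by (simp add: wdeg_def var_wt_def)

lemma wdeg_xmon: assumes "xmon k d m" shows "wdeg m = int d"
proof -
  have kx: "\<exists>j. v = X j" if "v \<in> Poly_Mapping.keys m" for v using assms that unfolding xmon_def by blast
  have "wdeg m = (\<Sum>v\<in>Poly_Mapping.keys m. int (Poly_Mapping.lookup m v * xw v))"
    unfolding wdeg_def by (rule sum.cong) (auto dest!: kx simp: xw_def var_wt_def)
  also have "\<dots> = int (xdeg m)" by (simp add: xdeg_alt)
  finally show ?thesis using assms unfolding xmon_def by simp
qed

lemma Good_base: assumes "okm n m" "\<forall>j. 0 < j \<longrightarrow> Poly_Mapping.lookup m (X j) \<le> n - j"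
  shows "Good n (wdeg m) (monom m)"
proof -
  have "in_ring n (monom m)" unfolding monom_def by (rule in_ring_single) (use assms(1) in \<open>auto simp: okm_def\<close>)
  moreover have "homog (wdeg m) (monom m)" by (simp add: homog_def monom_def)
  moreover have "reduced n (monom m)" unfolding reduced_def monom_def
  proof (rule allkeys_single, intro allI)
    fix j show "Poly_Mapping.lookup m (X j) \<le> n - j"
      using assms okm_lookup0[OF assms(1), of j] by (cases "j = 0") auto
  qed
  ultimately show ?thesis unfolding Good_def using S_zero by (intro exI[of _ "monom m"]) simp
qed



lemma hh_split: "1 \<le> k \<Longrightarrow> hh k d = xv k ^ d + (\<Sum>i=1..d. hh (k - 1) i * xv k ^ (d - i))"
proof -
  assume k: "1 \<le> k"
  then obtain k' where kk: "k = Suc k'" by (cases k) auto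
  have "hh k d = (\<Sum>i=0..d. hh k' i * xv k ^ (d - i))" using hh_Suc[of k' d] kk by simp
  also have "\<dots> = hh k' 0 * xv k ^ (d - 0) + (\<Sum>i=Suc 0..d. hh k' i * xv k ^ (d - i))"
    by (rule sum.atLeast_Suc_atMost) simp
  finally show ?thesis using kk by (simp add: hh_0)
qed

lemma reduce_step:
  fixes n k :: nat
  assumes k1: "1 \<le> k" and kn: "k \<le> n"
    and IHk: "\<And>m. okm n m \<Longrightarrow> (\<forall>j. k - 1 < j \<longrightarrow> Poly_Mapping.lookup m (X j) \<le> n - j) \<Longrightarrow> Good n (wdeg m) (monom m)"
  shows "okm n m \<Longrightarrow> (\<forall>j. k < j \<longrightarrow> Poly_Mapping.lookup m (X j) \<le> n - j) \<Longrightarrow> Good n (wdeg m) (monom m)"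
proof (induction "Poly_Mapping.lookup m (X k)" arbitrary: m rule: less_induct)
  case less
  show ?case
  proof (cases "Poly_Mapping.lookup m (X k) \<le> n - k")
    case True
    have "\<forall>j. k - 1 < j \<longrightarrow> Poly_Mapping.lookup m (X j) \<le> n - j"
    proof (intro allI impI)
      fix j assume "k - 1 < j"
      then have "j = k \<or> k < j" by auto
      then show "Poly_Mapping.lookup m (X j) \<le> n - j" using True less.prems(2) by auto
    qed
    then show ?thesis using IHk less.prems(1) by blast
  next
    case False
    define d where "d = Suc (n - k)"
    define m' where "m' = m - Poly_Mapping.single (X k) d"
    have dle: "d \<le> Poly_Mapping.lookup m (X k)" using False d_def by simp
    have m_eq: "m = m' + Poly_Mapping.single (X k) d"
      by (rule poly_mapping_eqI) (use dle in \<open>auto simp: m'_def lookup_add lookup_minus lookup_single when_def\<close>)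
    have lm': "Poly_Mapping.lookup m' v = (if v = X k then Poly_Mapping.lookup m v - d else Poly_Mapping.lookup m v)" for v
      by (simp add: m'_def lookup_minus lookup_single when_def)
    have keys_m': "Poly_Mapping.keys m' \<subseteq> Poly_Mapping.keys m"
      by (auto simp: in_keys_iff lm' split: if_splits)
    have im': "in_ring n (monom m')"
      unfolding monom_def by (rule in_ring_single) (use less.prems(1) keys_m' in \<open>auto simp: okm_def\<close>)
    define T where "T = (\<Sum>i=1..d. monom m' * (hh (k - 1) i * xv k ^ (d - i)))"
    have mm: "monom m = monom m' * xv k ^ d"
      by (simp add: xv_power_monom monom_mult m_eq[symmetric])
    have "monom m = monom m' * hh k d - T"
      unfolding mm T_def hh_split[OF k1, of d] by (simp add: algebra_simps sum_distrib_left)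
    then have diffS: "monom m - (- T) = monom m' * hh k d" by simp
    have hS: "monom m' * hh k d \<in> S_ideal n"
      by (rule S_mult[OF hh_in_S[OF kn] im']) (simp add: d_def)
    have wm: "wdeg m = wdeg m' + int d" using m_eq wdeg_add wdeg_single_X by metis
    have GT: "Good n (wdeg m) T"
      unfolding T_def
    proof (rule Good_sum)
      fix i assume i: "i \<in> {1..d}"
      let ?h = "hh (k - 1) i"
      have "monom m' * (?h * xv k ^ (d - i))
          = (\<Sum>m0\<in>Poly_Mapping.keys ?h. of_int (Poly_Mapping.lookup ?h m0) * monom (m' + m0 + Poly_Mapping.single (X k) (d - i)))"
        apply (subst poly_decomp[of ?h])
        apply (simp add: sum_distrib_left sum_distrib_right xv_power_monom)
        apply (rule sum.cong, simp)
        apply (simp add: monom_mult[symmetric] algebra_simps)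
        done
      also have "Good n (wdeg m) \<dots>"
      proof (rule Good_sum, rule Good_smult)
        fix m0 assume m0: "m0 \<in> Poly_Mapping.keys ?h"
        have xm: "xmon (k - 1) i m0" using hh_allkeys[of "k - 1" i] m0 unfolding allkeys_def by blast
        have m0X: "Poly_Mapping.lookup m0 (X j) = 0" if "k - 1 < j" for j
        proof (rule ccontr)
          assume "Poly_Mapping.lookup m0 (X j) \<noteq> 0"
          then have "X j \<in> Poly_Mapping.keys m0" by (simp add: in_keys_iff)
          then show False using xm that unfolding xmon_def by auto
        qed
        let ?mm = "m' + m0 + Poly_Mapping.single (X k) (d - i)"
        have lmm: "Poly_Mapping.lookup ?mm v = Poly_Mapping.lookup m' v + Poly_Mapping.lookup m0 v
            + (if v = X k then d - i else 0)" for v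
          by (simp add: lookup_add lookup_single when_def)
        have wmm: "wdeg ?mm = wdeg m"
          using wdeg_add[of "m' + m0" "Poly_Mapping.single (X k) (d - i)"] wdeg_add[of m' m0]
            wdeg_xmon[OF xm] wdeg_single_X[of k "d - i"] wm i by simp
        have ok: "okm n ?mm"
          unfolding okm_def
        proof
          fix v assume "v \<in> Poly_Mapping.keys ?mm"
          then have "v \<in> Poly_Mapping.keys m' \<or> v \<in> Poly_Mapping.keys m0 \<or> v = X k"
            by (auto simp: keys_add_mon split: if_splits)
          then show "var_ok n v"
          proof (elim disjE)
            assume "v \<in> Poly_Mapping.keys m'"
            then show ?thesis using keys_m' less.prems(1) unfolding okm_def by blast
          next
            assume "v \<in> Poly_Mapping.keys m0"
            then show ?thesis using xm kn unfolding xmon_def var_ok_def by auto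
          next
            assume "v = X k" then show ?thesis using k1 kn by (simp add: var_ok_def)
          qed
        qed
        have lt: "Poly_Mapping.lookup ?mm (X k) < Poly_Mapping.lookup m (X k)"
          using lmm[of "X k"] m0X[of k] lm'[of "X k"] dle i k1 by simp
        have hi: "\<forall>j. k < j \<longrightarrow> Poly_Mapping.lookup ?mm (X j) \<le> n - j"
        proof (intro allI impI)
          fix j assume j: "k < j"
          then have "Poly_Mapping.lookup ?mm (X j) = Poly_Mapping.lookup m (X j)"
            using lmm[of "X j"] m0X[of j] lm'[of "X j"] by simp
          then show "Poly_Mapping.lookup ?mm (X j) \<le> n - j" using less.prems(2) j by simp
        qed
        show "Good n (wdeg m) (monom ?mm)"
          using less.hyps[OF lt ok hi] wmm by simp
      qed
      finally show "Good n (wdeg m) (monom m' * (?h * xv k ^ (d - i)))" .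
    qed
    show ?thesis using Good_S[OF Good_uminus[OF GT]] diffS hS by simp
  qed
qed


lemma Pk: "k \<le> n \<Longrightarrow> okm n m \<Longrightarrow> (\<forall>j. k < j \<longrightarrow> Poly_Mapping.lookup m (X j) \<le> n - j) \<Longrightarrow> Good n (wdeg m) (monom m)"
proof (induction k arbitrary: m)
  case 0 then show ?case using Good_base by simp
next
  case (Suc k)
  show ?case
    by (rule reduce_step[of "Suc k" n, OF _ Suc.prems(1) _ Suc.prems(2) Suc.prems(3)])
       (use Suc.IH Suc.prems(1) in auto)
qed

lemma monom_good: "okm n m \<Longrightarrow> Good n (wdeg m) (monom m)"
  using Pk[of n n m] okm_lookup0[of n m] by simp

lemma good_poly: assumes "in_ring n c" "homog l c" shows "Good n l c"
proof -
  have "Good n l (\<Sum>m\<in>Poly_Mapping.keys c. of_int (Poly_Mapping.lookup c m) * monom m)"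
  proof (rule Good_sum, rule Good_smult)
    fix m assume m: "m \<in> Poly_Mapping.keys c"
    then have "okm n m" using assms(1) unfolding in_ring_def okm_def by blast
    moreover have "wdeg m = l" using assms(2) m unfolding homog_def by blast
    ultimately show "Good n l (monom m)" using monom_good by blast
  qed
  then show ?thesis using poly_decomp[of c] by simp
qed

definition dvdm :: "mon \<Rightarrow> mon \<Rightarrow> bool" where
  "dvdm m k = (\<forall>v. Poly_Mapping.lookup m v \<le> Poly_Mapping.lookup k v)"

lemma dvdm_decomp: "dvdm m k \<Longrightarrow> k = m + (k - m)"
  by (rule poly_mapping_eqI) (simp add: dvdm_def lookup_add lookup_minus)

lemma dvdm_iff: "dvdm m k \<longleftrightarrow> (\<exists>q. k = m + q)"
  using dvdm_decomp by (auto simp: dvdm_def lookup_add)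

lemma lookup_monom_mult:
  "Poly_Mapping.lookup (monom m * g) k = (if dvdm m k then Poly_Mapping.lookup g (k - m) else 0)"
proof -
  have "Poly_Mapping.lookup (monom m * g) k = (\<Sum>q. Poly_Mapping.lookup g q when k = m + q)"
  proof -
    have "Poly_Mapping.lookup (monom m * g) k = (\<Sum>a. (if a = m then 1 else 0) * (\<Sum>q. Poly_Mapping.lookup g q when k = a + q))"
      by (simp add: lookup_mult monom_def lookup_single when_def eq_commute[of m])
    also have "\<dots> = (\<Sum>a. if a = m then (\<Sum>q. Poly_Mapping.lookup g q when k = a + q) else 0)"
      by (rule Sum_any.cong) simp
    finally show ?thesis by simp
  qed
  also have "\<dots> = (if dvdm m k then Poly_Mapping.lookup g (k - m) else 0)"
  proof (cases "dvdm m k")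
    case True
    have "(k = m + q) = (q = k - m)" for q using dvdm_decomp[OF True] by auto
    then show ?thesis using True by simp
  next
    case False
    then have "k \<noteq> m + q" for q using dvdm_iff by blast
    then show ?thesis using False by simp
  qed
  finally show ?thesis .
qed


definition dl :: "nat \<Rightarrow> mon" where
  "dl n = (\<Sum>j\<in>{1..n}. Poly_Mapping.single (X j) (n - j))"

lemma pt_dl: "pt n = monom (dl n)" by (simp add: pt_def dl_def)

lemma lookup_dl: "Poly_Mapping.lookup (dl n) v = (case v of X j \<Rightarrow> if 1 \<le> j \<and> j \<le> n then n - j else 0 | A i \<Rightarrow> 0)"
  by (auto simp: dl_def lookup_sum lookup_single when_def split: lvar.splits)

definition psi :: "nat \<Rightarrow> mon \<Rightarrow> lpoly \<Rightarrow> int" where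
  "psi n a p = (\<Sum>\<sigma>\<in>{\<sigma>. \<sigma> permutes {1..n}}. (sign \<sigma> :: int) * Poly_Mapping.lookup p (rvm \<sigma> (dl n) + a))"

lemma psi_add: "psi n a (p + q) = psi n a p + psi n a q"
  by (simp add: psi_def lookup_add algebra_simps sum.distrib)

lemma psi_zero: "psi n a 0 = 0" by (simp add: psi_def)

lemma psi_sum: "psi n a (sum f B) = (\<Sum>i\<in>B. psi n a (f i))"
  by (induction B rule: infinite_finite_induct) (simp_all add: psi_add psi_zero)

lemma sum_when_dvdm:
  "(\<Sum>q. Poly_Mapping.lookup g q when k = m + q) = (if dvdm m k then Poly_Mapping.lookup (g::lpoly) (k - m) else 0)"
proof (cases "dvdm m k")
  case True
  have "(k = m + q) = (q = k - m)" for q using dvdm_decomp[OF True] by auto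
  then show ?thesis using True by simp
next
  case False
  then have "k \<noteq> m + q" for q using dvdm_iff by blast
  then show ?thesis using False by simp
qed

lemma lookup_single_mult:
  "Poly_Mapping.lookup (Poly_Mapping.single m (c::int) * (g::lpoly)) k = (if dvdm m k then c * Poly_Mapping.lookup g (k - m) else 0)"
proof -
  have "Poly_Mapping.lookup (Poly_Mapping.single m c * g) k = (\<Sum>a. (if a = m then c else 0) * (\<Sum>q. Poly_Mapping.lookup g q when k = a + q))"
    by (simp add: lookup_mult lookup_single when_def eq_commute[of m])
  also have "\<dots> = (\<Sum>a. if a = m then c * (\<Sum>q. Poly_Mapping.lookup g q when k = a + q) else 0)"
    by (rule Sum_any.cong) simp
  finally show ?thesis by (simp add: sum_when_dvdm)
qed

lemma psi_smult: "psi n a (of_int c * p) = c * psi n a p"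
proof -
  have "Poly_Mapping.lookup (of_int c * p) k = c * Poly_Mapping.lookup p k" for k
  proof -
    have "Poly_Mapping.single (0::mon) (of_int c::int) = (of_int c :: lpoly)" by (rule single_of_int)
    then have "of_int c * p = Poly_Mapping.single 0 c * p" by simp
    then show ?thesis by (simp add: lookup_single_mult dvdm_def)
  qed
  then show ?thesis by (simp add: psi_def sum_distrib_left algebra_simps)
qed


definition noX :: "mon \<Rightarrow> bool" where "noX a = (\<forall>j. Poly_Mapping.lookup a (X j) = 0)"

lemma rvm_minus: "inj \<sigma> \<Longrightarrow> rvm \<sigma> (x - y) = rvm \<sigma> x - rvm \<sigma> y"
  by (rule poly_mapping_eqI) (simp add: lookup_rvm lookup_minus)

lemma rvm_noX: "inj \<sigma> \<Longrightarrow> noX a \<Longrightarrow> rvm \<sigma> a = a"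
  by (rule poly_mapping_eqI) (auto simp: lookup_rvm noX_def rv_def split: lvar.splits)

lemma rvm_transpose_fix:
  assumes "Poly_Mapping.lookup m (X i) = Poly_Mapping.lookup m (X j)"
  shows "rvm (Transposition.transpose i j) m = m"
proof (rule poly_mapping_eqI)
  fix v
  have inj: "inj (Transposition.transpose i j)" by simp
  show "Poly_Mapping.lookup (rvm (Transposition.transpose i j) m) v = Poly_Mapping.lookup m v"
    using assms by (auto simp: lookup_rvm[OF inj] rv_def transpose_def split: lvar.splits)
qed

lemma rv_inv: "bij \<sigma> \<Longrightarrow> rv \<sigma> (rv (inv \<sigma>) v) = v"
  by (auto simp: rv_def bij_is_surj surj_f_inv_f split: lvar.splits)

lemma dvdm_rvm: assumes "bij \<sigma>" shows "dvdm (rvm \<sigma> x) (rvm \<sigma> y) = dvdm x y"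
proof -
  have i: "inj \<sigma>" using assms bij_is_inj by auto
  show ?thesis
    unfolding dvdm_def lookup_rvm[OF i]
    by (metis rv_inv[OF assms])
qed

lemma sym_lookup:
  assumes "g \<in> sym_gens n" "\<tau> permutes {1..n}"
  shows "Poly_Mapping.lookup g (rvm \<tau> x) = Poly_Mapping.lookup g x"
  using assms unfolding sym_gens_def symmetric_def rvm_def by blast

lemma xdeg_noX: "noX x \<Longrightarrow> xdeg x = 0"
  by (auto simp: xdeg_alt noX_def xw_def intro!: sum.neutral split: lvar.splits)

lemma set_sum_ge: "finite S \<Longrightarrow> (\<Sum>i<card S. i) \<le> \<Sum>S"
proof (induction "card S" arbitrary: S)
  case 0 then show ?case by simp
next
  case (Suc c)
  then have ne: "S \<noteq> {}" by auto
  define M where "M = Max S"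
  have MS: "M \<in> S" using Suc.prems ne M_def by simp
  have "S \<subseteq> {0..M}" using Suc.prems M_def by auto
  then have "card S \<le> Suc M" using card_mono[of "{0..M}" S] by simp
  then have cM: "c \<le> M" using Suc.hyps(2) by simp
  have cS': "c = card (S - {M})" using Suc.hyps(2) MS Suc.prems by simp
  have IH: "(\<Sum>i<c. i) \<le> \<Sum>(S - {M})" using Suc.hyps(1)[OF cS'] Suc.prems by (simp add: cS')
  have "\<Sum>S = M + \<Sum>(S - {M})" using sum.remove[OF Suc.prems MS, of "\<lambda>x. x"] by simp
  moreover have "(\<Sum>i<card S. i) = (\<Sum>i<c. i) + c" using Suc.hyps(2)[symmetric] by simp
  ultimately show ?case using IH cM by simp
qed

lemma inj_sum_ge: "finite B \<Longrightarrow> inj_on f B \<Longrightarrow> (\<Sum>i<card B. i) \<le> (\<Sum>x\<in>B. (f x :: nat))"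
  using set_sum_ge[of "f ` B"] by (simp add: card_image sum.reindex)

lemma sum_rev: "(\<Sum>j\<in>{1..n}. n - j) = (\<Sum>i<n. i)" for n :: nat
proof (induction n)
  case 0 then show ?case by simp
next
  case (Suc n)
  have "(\<Sum>j\<in>{1..Suc n}. Suc n - j) = (\<Sum>j\<in>{1..n}. Suc n - j) + 0" by simp
  also have "(\<Sum>j\<in>{1..n}. Suc n - j) = (\<Sum>j\<in>{1..n}. (n - j) + 1)"
    by (rule sum.cong) auto
  also have "\<dots> = (\<Sum>j\<in>{1..n}. n - j) + n" unfolding sum.distrib by simp
  finally show ?case using Suc.IH by simp
qed

lemma lookup_rvm_dl:
  assumes "\<sigma> permutes {1..n}"
  shows "Poly_Mapping.lookup (rvm \<sigma> (dl n)) (X j) = (if j \<in> {1..n} then n - \<sigma> j else 0)"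
proof -
  have i: "inj \<sigma>" using permutes_inj[OF assms] .
  have "\<sigma> j \<in> {1..n} \<longleftrightarrow> j \<in> {1..n}" using permutes_in_image[OF assms] by simp
  then show ?thesis by (auto simp: lookup_rvm[OF i] lookup_dl rv_def)
qed

lemma psi_monom_sym:
  assumes a: "noX a" and g: "g \<in> sym_gens n"
  shows "psi n a (monom m * g) = 0"
proof -
  let ?P = "{\<sigma>. \<sigma> permutes {1..n}}"
  define K where "K \<sigma> = rvm \<sigma> (dl n) + a" for \<sigma>
  define t where "t \<sigma> = (sign \<sigma> :: int) * (if dvdm m (K \<sigma>) then Poly_Mapping.lookup g (K \<sigma> - m) else 0)" for \<sigma>
  have psi_eq: "psi n a (monom m * g) = (\<Sum>\<sigma>\<in>?P. t \<sigma>)"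
    unfolding psi_def t_def K_def by (simp add: lookup_monom_mult)
  show ?thesis
  proof (cases "inj_on (\<lambda>j. Poly_Mapping.lookup m (X j)) {1..n}")
    case False
    then obtain i j where ij: "i \<in> {1..n}" "j \<in> {1..n}" "i \<noteq> j"
      "Poly_Mapping.lookup m (X i) = Poly_Mapping.lookup m (X j)"
      unfolding inj_on_def by blast
    define \<tau> where "\<tau> = Transposition.transpose i j"
    have \<tau>p: "\<tau> permutes {1..n}" using ij by (simp add: \<tau>_def permutes_swap_id)
    have \<tau>i: "inj \<tau>" using permutes_inj[OF \<tau>p] .
    have \<tau>b: "bij \<tau>" using permutes_bij[OF \<tau>p] .
    have tneg: "t (\<sigma> \<circ> \<tau>) = - t \<sigma>" if \<sigma>p: "\<sigma> permutes {1..n}" for \<sigma>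
    proof -
      have \<sigma>i: "inj \<sigma>" using permutes_inj[OF \<sigma>p] .
      have sg: "(sign (\<sigma> \<circ> \<tau>) :: int) = - sign \<sigma>"
      proof -
        have "permutation \<sigma>" "permutation \<tau>" using \<sigma>p \<tau>p permutation_permutes by blast+
        then have "(sign (\<sigma> \<circ> \<tau>) :: int) = sign \<sigma> * sign \<tau>" by (rule sign_compose)
        then show ?thesis using ij(3) by (simp add: \<tau>_def sign_swap_id)
      qed
      have Kt: "K (\<sigma> \<circ> \<tau>) = rvm \<tau> (K \<sigma>)"
        unfolding K_def using rvm_comp[OF \<tau>i \<sigma>i, of "dl n"] rvm_plus[OF \<tau>i] rvm_noX[OF \<tau>i a] by simp
      have mf: "rvm \<tau> m = m" unfolding \<tau>_def by (rule rvm_transpose_fix[OF ij(4)])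
      have dv: "dvdm m (K (\<sigma> \<circ> \<tau>)) = dvdm m (K \<sigma>)"
        using dvdm_rvm[OF \<tau>b, of m "K \<sigma>"] mf Kt by simp
      have lk: "Poly_Mapping.lookup g (K (\<sigma> \<circ> \<tau>) - m) = Poly_Mapping.lookup g (K \<sigma> - m)"
        using Kt mf rvm_minus[OF \<tau>i, of "K \<sigma>" m] sym_lookup[OF g \<tau>p, of "K \<sigma> - m"] by simp
      show ?thesis unfolding t_def sg dv lk by simp
    qed
    have "(\<Sum>\<sigma>\<in>?P. t \<sigma>) = (\<Sum>\<sigma>\<in>?P. t (\<sigma> \<circ> \<tau>))"
      by (rule sum_permutations_compose_right[OF \<tau>p])
    also have "\<dots> = - (\<Sum>\<sigma>\<in>?P. t \<sigma>)"
      by (simp add: tneg sum_negf)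
    finally show ?thesis using psi_eq by simp
  next
    case True
    have "t \<sigma> = 0" if \<sigma>p: "\<sigma> \<in> ?P" for \<sigma>
    proof (cases "dvdm m (K \<sigma>)")
      case False then show ?thesis by (simp add: t_def)
    next
      case dv: True
      have \<sigma>P: "\<sigma> permutes {1..n}" using \<sigma>p by simp
      have lK: "Poly_Mapping.lookup (K \<sigma>) (X j) = (if j \<in> {1..n} then n - \<sigma> j else 0)" for j
        using lookup_rvm_dl[OF \<sigma>P, of j] a by (simp add: K_def lookup_add noX_def)
      have le: "\<forall>j\<in>{1..n}. Poly_Mapping.lookup m (X j) \<le> n - \<sigma> j"
        using dv lK unfolding dvdm_def by (metis)
      have s1: "(\<Sum>i<n. i) \<le> (\<Sum>j\<in>{1..n}. Poly_Mapping.lookup m (X j))"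
        using inj_sum_ge[OF _ True] by simp
      have s2: "(\<Sum>j\<in>{1..n}. n - \<sigma> j) = (\<Sum>i<n. i)"
        using sum.permute[OF \<sigma>P, of "\<lambda>j. n - j"] sum_rev[of n] by (simp add: o_def)
      have eq: "\<forall>j\<in>{1..n}. Poly_Mapping.lookup m (X j) = n - \<sigma> j"
      proof (rule ccontr)
        assume "\<not> ?thesis"
        then obtain j where "j \<in> {1..n}" "Poly_Mapping.lookup m (X j) < n - \<sigma> j" using le by force
        then have "(\<Sum>j\<in>{1..n}. Poly_Mapping.lookup m (X j)) < (\<Sum>j\<in>{1..n}. n - \<sigma> j)"
          using le by (intro sum_strict_mono_ex1) auto
        then show False using s1 s2 by simp
      qed
      have "noX (K \<sigma> - m)"
        unfolding noX_def
      proof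
        fix j show "Poly_Mapping.lookup (K \<sigma> - m) (X j) = 0"
          using eq lK[of j] by (cases "j \<in> {1..n}") (auto simp: lookup_minus)
      qed
      then have "xdeg (K \<sigma> - m) = 0" by (rule xdeg_noX)
      then have "K \<sigma> - m \<notin> Poly_Mapping.keys g" using g unfolding sym_gens_def by auto
      then show ?thesis by (simp add: t_def in_keys_iff)
    qed
    then show ?thesis using psi_eq by simp
  qed
qed


lemma psi_S: assumes a: "noX a" and p: "p \<in> S_ideal n" shows "psi n a p = 0"
proof -
  from p have "\<exists>k q g. p = (\<Sum>i<(k::nat). q i * g i) \<and> (\<forall>i<k. in_ring n (q i) \<and> g i \<in> sym_gens n)"
    unfolding S_ideal_def by simp
  then obtain k q g where pk: "p = (\<Sum>i<(k::nat). q i * g i)" "\<forall>i<k. in_ring n (q i) \<and> g i \<in> sym_gens n"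
    by blast
  have "psi n a (q i * g i) = 0" if "i < k" for i
  proof -
    have g: "g i \<in> sym_gens n" using pk(2) that by blast
    have "q i * g i = (\<Sum>m\<in>Poly_Mapping.keys (q i). of_int (Poly_Mapping.lookup (q i) m) * (monom m * g i))"
      by (subst poly_decomp[of "q i"]) (simp add: sum_distrib_right mult.assoc)
    then show ?thesis by (simp add: psi_sum psi_smult psi_monom_sym[OF a g])
  qed
  then show ?thesis by (simp add: pk(1) psi_sum)
qed

definition Eset :: "nat \<Rightarrow> mon set" where
  "Eset n = {e. (\<forall>v\<in>Poly_Mapping.keys e. \<exists>j. 1 \<le> j \<and> j \<le> n \<and> v = X j) \<and> (\<forall>j. Poly_Mapping.lookup e (X j) \<le> n - j)}"

definition lexlt :: "mon \<Rightarrow> mon \<Rightarrow> bool" where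
  "lexlt u e = (\<exists>k. (\<forall>j<k. Poly_Mapping.lookup u (X j) = Poly_Mapping.lookup e (X j)) \<and> Poly_Mapping.lookup u (X k) < Poly_Mapping.lookup e (X k))"

lemma lexlt_irrefl: "\<not> lexlt e e" by (simp add: lexlt_def)

lemma lexlt_trans: assumes "lexlt u v" "lexlt v w" shows "lexlt u w"
proof -
  obtain k1 where k1: "\<forall>j<k1. Poly_Mapping.lookup u (X j) = Poly_Mapping.lookup v (X j)" "Poly_Mapping.lookup u (X k1) < Poly_Mapping.lookup v (X k1)"
    using assms(1) lexlt_def by blast
  obtain k2 where k2: "\<forall>j<k2. Poly_Mapping.lookup v (X j) = Poly_Mapping.lookup w (X j)" "Poly_Mapping.lookup v (X k2) < Poly_Mapping.lookup w (X k2)"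
    using assms(2) lexlt_def by blast
  show ?thesis unfolding lexlt_def
  proof (rule exI[of _ "min k1 k2"], intro conjI allI impI)
    fix j assume "j < min k1 k2" then show "Poly_Mapping.lookup u (X j) = Poly_Mapping.lookup w (X j)" using k1 k2 by simp
  next
    show "Poly_Mapping.lookup u (X (min k1 k2)) < Poly_Mapping.lookup w (X (min k1 k2))"
      using k1 k2 by (cases k1 k2 rule: linorder_cases) (auto simp: min_def)
  qed
qed

lemma lookup_Eset_out: assumes "e \<in> Eset n" "\<not> (1 \<le> j \<and> j \<le> n)" shows "Poly_Mapping.lookup e (X j) = 0"
proof (rule ccontr)
  assume "Poly_Mapping.lookup e (X j) \<noteq> 0"
  then have "X j \<in> Poly_Mapping.keys e" by (simp add: in_keys_iff)
  then show False using assms unfolding Eset_def by auto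
qed

lemma lookup_Eset_A: assumes "e \<in> Eset n" shows "Poly_Mapping.lookup e (A i) = 0"
proof (rule ccontr)
  assume "Poly_Mapping.lookup e (A i) \<noteq> 0"
  then have "A i \<in> Poly_Mapping.keys e" by (simp add: in_keys_iff)
  then show False using assms unfolding Eset_def by auto
qed

lemma finite_Eset: "finite (Eset n)"
proof -
  define g where "g f = (\<Sum>j\<in>{1..n}. Poly_Mapping.single (X j) (f j))" for f :: "nat \<Rightarrow> nat"
  have "Eset n \<subseteq> g ` (PiE {1..n} (\<lambda>_. {0..n}))"
  proof
    fix e assume e: "e \<in> Eset n"
    define f where "f = restrict (\<lambda>j. Poly_Mapping.lookup e (X j)) {1..n}"
    have "Poly_Mapping.lookup e (X j) \<le> n" for j
      using e unfolding Eset_def by (metis (mono_tags, lifting) diff_le_self le_trans mem_Collect_eq)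
    then have "f \<in> PiE {1..n} (\<lambda>_. {0..n})" unfolding f_def by auto
    moreover have "e = g f"
    proof (rule poly_mapping_eqI)
      fix v
      show "Poly_Mapping.lookup e v = Poly_Mapping.lookup (g f) v"
        using lookup_Eset_out[OF e] lookup_Eset_A[OF e]
        by (cases v) (auto simp: g_def f_def lookup_sum lookup_single when_def)
    qed
    ultimately show "e \<in> g ` (PiE {1..n} (\<lambda>_. {0..n}))" by blast
  qed
  moreover have "finite (PiE {1..n} (\<lambda>_. {0..n::nat}))" by (rule finite_PiE) auto
  ultimately show ?thesis using finite_subset by blast
qed

definition Rlex :: "nat \<Rightarrow> (mon \<times> mon) set" where
  "Rlex n = {(u, e). u \<in> Eset n \<and> e \<in> Eset n \<and> lexlt u e}"

lemma wf_Rlex: "wf (Rlex n)"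
proof (rule finite_acyclic_wf)
  show "finite (Rlex n)"
    by (rule finite_subset[of _ "Eset n \<times> Eset n"]) (auto simp: Rlex_def finite_Eset)
  have tr: "trans (Rlex n)" unfolding trans_def Rlex_def using lexlt_trans by blast
  show "acyclic (Rlex n)" unfolding acyclic_irrefl trancl_id[OF tr] irrefl_def
    by (simp add: Rlex_def lexlt_irrefl)
qed


lemma dvdm_dl: assumes "e \<in> Eset n" shows "dvdm e (dl n)"
  unfolding dvdm_def
proof
  fix v show "Poly_Mapping.lookup e v \<le> Poly_Mapping.lookup (dl n) v"
  proof (cases v)
    case (A i) then show ?thesis using lookup_Eset_A[OF assms] by simp
  next
    case (X j)
    show ?thesis
    proof (cases "1 \<le> j \<and> j \<le> n")
      case True then show ?thesis using assms X unfolding Eset_def by (simp add: lookup_dl)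
    next
      case False then show ?thesis using lookup_Eset_out[OF assms False] X by simp
    qed
  qed
qed

lemma claim:
  assumes iq: "in_ring n q" and rq: "reduced n q"
    and HQ: "\<forall>b. nonconst_xmon n b \<longrightarrow> q * monom b \<in> S_ideal n"
  shows "e \<in> Eset n \<Longrightarrow> e \<noteq> dl n \<Longrightarrow> noX a \<Longrightarrow> Poly_Mapping.lookup q (e + a) = 0"
proof (induction e arbitrary: a rule: wf_induct_rule[OF wf_Rlex[of n]])
  case (1 e)
  note eE = "1.prems"(1) and ne = "1.prems"(2) and a = "1.prems"(3)
  define b where "b = dl n - e"
  have lb: "Poly_Mapping.lookup b v = Poly_Mapping.lookup (dl n) v - Poly_Mapping.lookup e v" for v
    by (simp add: b_def lookup_minus)
  have dle: "dvdm e (dl n)" by (rule dvdm_dl[OF eE])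
  have dleq: "dl n = e + b" unfolding b_def by (rule dvdm_decomp[OF dle])
  have b0: "b \<noteq> 0" using dleq ne by auto
  have bX: "\<exists>j. 1 \<le> j \<and> j \<le> n \<and> v = X j" if "v \<in> Poly_Mapping.keys b" for v
  proof -
    have "Poly_Mapping.lookup (dl n) v \<noteq> 0" using that lb[of v] by (auto simp: in_keys_iff)
    then show ?thesis by (auto simp: lookup_dl split: lvar.splits if_splits)
  qed
  have "nonconst_xmon n b" unfolding nonconst_xmon_def using b0 bX by blast
  then have "q * monom b \<in> S_ideal n" using HQ by blast
  then have psi0: "psi n a (monom b * q) = 0" using psi_S[OF a] by (simp add: mult.commute)
  let ?P = "{\<sigma>. \<sigma> permutes {1..n}}"
  define K where "K \<sigma> = rvm \<sigma> (dl n) + a" for \<sigma>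
  define t where "t \<sigma> = (sign \<sigma> :: int) * (if dvdm b (K \<sigma>) then Poly_Mapping.lookup q (K \<sigma> - b) else 0)" for \<sigma>
  have psi_eq: "psi n a (monom b * q) = (\<Sum>\<sigma>\<in>?P. t \<sigma>)"
    unfolding psi_def t_def K_def by (simp add: lookup_monom_mult)
  have idP: "id \<in> ?P" by (simp add: permutes_id)
  have fin: "finite ?P" by (rule finite_permutations) simp
  have tid: "t id = Poly_Mapping.lookup q (e + a)"
  proof -
    have "K id = b + (e + a)" unfolding K_def rvm_id dleq by (simp add: algebra_simps)
    then show ?thesis unfolding t_def by (simp add: dvdm_iff)
  qed
  have toth: "t \<sigma> = 0" if \<sigma>P: "\<sigma> \<in> ?P - {id}" for \<sigma>
  proof (cases "dvdm b (K \<sigma>)")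
    case False then show ?thesis by (simp add: t_def)
  next
    case dv: True
    have \<sigma>p: "\<sigma> permutes {1..n}" and \<sigma>id: "\<sigma> \<noteq> id" using \<sigma>P by auto
    have \<sigma>i: "inj \<sigma>" using permutes_inj[OF \<sigma>p] .
    define ux where "ux = rvm \<sigma> (dl n) - b"
    have lK: "Poly_Mapping.lookup (K \<sigma>) (X j) = (if j \<in> {1..n} then n - \<sigma> j else 0)" for j
      using lookup_rvm_dl[OF \<sigma>p, of j] a by (simp add: K_def lookup_add noX_def)
    have lSA: "Poly_Mapping.lookup (rvm \<sigma> (dl n)) (A i) = 0" for i
      by (simp add: lookup_rvm[OF \<sigma>i] lookup_dl rv_def)
    have bA: "Poly_Mapping.lookup b (A i) = 0" for i using lb[of "A i"] by (simp add: lookup_dl)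
    have uux: "K \<sigma> - b = ux + a"
    proof (rule poly_mapping_eqI)
      fix v show "Poly_Mapping.lookup (K \<sigma> - b) v = Poly_Mapping.lookup (ux + a) v"
        using a bA by (cases v) (auto simp: K_def ux_def lookup_minus lookup_add noX_def)
    qed
    have lux: "Poly_Mapping.lookup ux (X j) = Poly_Mapping.lookup (K \<sigma>) (X j) - Poly_Mapping.lookup b (X j)" for j
      using a by (simp add: ux_def K_def lookup_minus lookup_add noX_def)
    have lu: "Poly_Mapping.lookup (K \<sigma> - b) (X j) = Poly_Mapping.lookup ux (X j)" for j
      using a by (simp add: uux lookup_add noX_def)
    show ?thesis
    proof (cases "\<exists>j. n - j < Poly_Mapping.lookup ux (X j)")
      case True
      then obtain j where j: "n - j < Poly_Mapping.lookup ux (X j)" by blast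
      have "K \<sigma> - b \<notin> Poly_Mapping.keys q"
        using rq j lu[of j] unfolding reduced_def allkeys_def by (metis not_le)
      then show ?thesis by (simp add: t_def in_keys_iff)
    next
      case False
      then have uxb: "\<forall>j. Poly_Mapping.lookup ux (X j) \<le> n - j" by (simp add: not_less)
      have uxE: "ux \<in> Eset n"
        unfolding Eset_def
      proof (intro CollectI conjI ballI)
        fix v assume v: "v \<in> Poly_Mapping.keys ux"
        show "\<exists>j. 1 \<le> j \<and> j \<le> n \<and> v = X j"
        proof (cases v)
          case (A i)
          then show ?thesis using v lSA[of i] by (simp add: ux_def in_keys_iff lookup_minus)
        next
          case (X j)
          then have "Poly_Mapping.lookup ux (X j) \<noteq> 0" using v by (simp add: in_keys_iff)
          then have "j \<in> {1..n}" using lux[of j] lK[of j] by (auto split: if_splits)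
          then show ?thesis using X by auto
        qed
      qed (rule uxb)
      obtain k where k: "\<sigma> k \<noteq> k" "\<forall>j<k. \<sigma> j = j"
      proof -
        have "\<exists>k. \<sigma> k \<noteq> k" using \<sigma>id by auto
        then have "\<sigma> (LEAST k. \<sigma> k \<noteq> k) \<noteq> (LEAST k. \<sigma> k \<noteq> k)" by (rule LeastI_ex)
        moreover have "\<forall>j<(LEAST k. \<sigma> k \<noteq> k). \<sigma> j = j" using not_less_Least by blast
        ultimately show ?thesis using that by blast
      qed
      have kn: "k \<in> {1..n}" using k(1) permutes_not_in[OF \<sigma>p] by blast
      have skn: "\<sigma> k \<in> {1..n}" using permutes_in_image[OF \<sigma>p] kn by simp
      have sk: "k < \<sigma> k"
      proof (rule ccontr)
        assume "\<not> k < \<sigma> k"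
        then have "\<sigma> k < k" using k(1) by simp
        then have "\<sigma> (\<sigma> k) = \<sigma> k" using k(2) by simp
        then show False using injD[OF \<sigma>i] k(1) by metis
      qed
      have ek: "Poly_Mapping.lookup e (X k) \<le> n - k" using eE unfolding Eset_def by blast
      have bk: "Poly_Mapping.lookup b (X k) = (n - k) - Poly_Mapping.lookup e (X k)"
        using lb[of "X k"] kn by (simp add: lookup_dl)
      have bkle: "Poly_Mapping.lookup b (X k) \<le> n - \<sigma> k"
        using dv lK[of k] skn kn unfolding dvdm_def by (metis)
      have ltk: "Poly_Mapping.lookup ux (X k) < Poly_Mapping.lookup e (X k)"
        using lux[of k] lK[of k] kn bk bkle ek sk skn by auto
      have eqj: "Poly_Mapping.lookup ux (X j) = Poly_Mapping.lookup e (X j)" if "j < k" for j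
      proof (cases "j \<in> {1..n}")
        case True
        have "\<sigma> j = j" using k(2) that by blast
        moreover have "Poly_Mapping.lookup e (X j) \<le> n - j" using eE unfolding Eset_def by blast
        moreover have "Poly_Mapping.lookup b (X j) = (n - j) - Poly_Mapping.lookup e (X j)"
          using lb[of "X j"] True by (simp add: lookup_dl)
        ultimately show ?thesis using lux[of j] lK[of j] True by auto
      next
        case False
        then show ?thesis using lux[of j] lK[of j] lookup_Eset_out[OF eE, of j] by auto
      qed
      have lx: "lexlt ux e" unfolding lexlt_def using eqj ltk by blast
      have uxne: "ux \<noteq> dl n"
      proof
        assume "ux = dl n"
        then have "lexlt (dl n) e" using lx by simp
        then obtain k' where "Poly_Mapping.lookup (dl n) (X k') < Poly_Mapping.lookup e (X k')"
          unfolding lexlt_def by blast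
        then show False using dle unfolding dvdm_def by (metis not_le)
      qed
      have "(ux, e) \<in> Rlex n" unfolding Rlex_def using uxE eE lx by blast
      then have "Poly_Mapping.lookup q (ux + a) = 0" using "1.IH" uxE uxne a by blast
      then show ?thesis by (simp add: t_def uux)
    qed
  qed
  have "(\<Sum>\<sigma>\<in>?P. t \<sigma>) = t id + (\<Sum>\<sigma>\<in>?P - {id}. t \<sigma>)"
    by (rule sum.remove[OF fin idP])
  also have "(\<Sum>\<sigma>\<in>?P - {id}. t \<sigma>) = 0" using toth by (intro sum.neutral) blast
  finally have s: "(\<Sum>\<sigma>\<in>?P. t \<sigma>) = t id" by (simp only: add_0_right)
  show ?case using psi0 psi_eq tid s by (metis)
qed


definition isX :: "lvar \<Rightarrow> bool" where "isX v = (case v of X j \<Rightarrow> True | A i \<Rightarrow> False)"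

definition xpart :: "mon \<Rightarrow> mon" where
  "xpart m = Poly_Mapping.mapp (\<lambda>v c. if isX v then c else 0) m"
definition apart :: "mon \<Rightarrow> mon" where
  "apart m = Poly_Mapping.mapp (\<lambda>v c. if isX v then 0 else c) m"

lemma lookup_xpart: "Poly_Mapping.lookup (xpart m) v = (if isX v then Poly_Mapping.lookup m v else 0)"
  by (auto simp: xpart_def lookup_mapp when_def in_keys_iff)
lemma lookup_apart: "Poly_Mapping.lookup (apart m) v = (if isX v then 0 else Poly_Mapping.lookup m v)"
  by (auto simp: apart_def lookup_mapp when_def in_keys_iff)

lemma xa_decomp: "m = xpart m + apart m"
  by (rule poly_mapping_eqI) (simp add: lookup_add lookup_xpart lookup_apart)

lemma noX_apart: "noX (apart m)"
  by (simp add: noX_def lookup_apart isX_def)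

lemma wdeg_sum: "wdeg (sum f B) = (\<Sum>i\<in>B. wdeg (f i))"
  by (induction B rule: infinite_finite_induct) (simp_all add: wdeg_add)

lemma wdeg_dl: "wdeg (dl n) = int (n * (n - 1) div 2)"
proof -
  have "wdeg (dl n) = (\<Sum>j\<in>{1..n}. int (n - j))"
    unfolding dl_def wdeg_sum by (simp add: wdeg_single_X)
  also have "\<dots> = int (\<Sum>j\<in>{1..n}. n - j)" by simp
  also have "(\<Sum>j\<in>{1..n}. n - j) = (\<Sum>i<n. i)" by (rule sum_rev)
  also have "(\<Sum>i<n. i) = n * (n - 1) div 2"
    using Sum_Ico_nat[of 0 n] by (simp add: lessThan_atLeast0)
  finally show ?thesis .
qed

theorem lemma4p4:
  fixes n :: nat and l :: int and c :: lpoly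
  assumes "1 \<le> n"
    and "in_ring n c"
    and "homog l c"
    and "\<forall>m. nonconst_xmon n m \<longrightarrow> c * monom m \<in> S_ideal n"
  shows "\<exists>a. in_Laz a \<and> homog (l - int (n * (n - 1) div 2)) a \<and> c - a * pt n \<in> S_ideal n"
proof -
  obtain q where iq: "in_ring n q" and hq: "homog l q" and rq: "reduced n q" and cq: "c - q \<in> S_ideal n"
    using good_poly[OF assms(2) assms(3)] unfolding Good_def by blast
  have HQ: "\<forall>b. nonconst_xmon n b \<longrightarrow> q * monom b \<in> S_ideal n"
  proof (intro allI impI)
    fix b assume b: "nonconst_xmon n b"
    have ib: "in_ring n (monom b)"
      unfolding monom_def by (rule in_ring_single) (use b in \<open>auto simp: nonconst_xmon_def var_ok_def\<close>)
    have "q * monom b = c * monom b - (c - q) * monom b" by (simp add: algebra_simps)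
    then show "q * monom b \<in> S_ideal n"
      using S_diff[OF _ S_mult_right[OF cq ib]] assms(4) b by simp
  qed
  have keyx: "xpart m = dl n" if m: "m \<in> Poly_Mapping.keys q" for m
  proof (rule ccontr)
    assume ne: "xpart m \<noteq> dl n"
    have okm: "\<forall>v\<in>Poly_Mapping.keys m. var_ok n v" using iq m unfolding in_ring_def by blast
    have "xpart m \<in> Eset n"
      unfolding Eset_def
    proof (intro CollectI conjI ballI allI)
      fix v assume v: "v \<in> Poly_Mapping.keys (xpart m)"
      then have "isX v" "v \<in> Poly_Mapping.keys m" by (auto simp: in_keys_iff lookup_xpart split: if_splits)
      then show "\<exists>j. 1 \<le> j \<and> j \<le> n \<and> v = X j" using okm
        by (cases v) (auto simp: isX_def var_ok_def)
    next
      fix j show "Poly_Mapping.lookup (xpart m) (X j) \<le> n - j"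
        using rq m unfolding reduced_def allkeys_def by (simp add: lookup_xpart isX_def)
    qed
    then have "Poly_Mapping.lookup q (xpart m + apart m) = 0"
      using claim[OF iq rq HQ _ ne noX_apart] by blast
    then show False using m xa_decomp[of m] by (simp add: in_keys_iff)
  qed
  define a0 where "a0 = (\<Sum>m\<in>Poly_Mapping.keys q. of_int (Poly_Mapping.lookup q m) * monom (apart m))"
  have "a0 * pt n = (\<Sum>m\<in>Poly_Mapping.keys q. of_int (Poly_Mapping.lookup q m) * monom (apart m + dl n))"
    unfolding a0_def pt_dl by (simp add: sum_distrib_right mult.assoc monom_mult)
  also have "\<dots> = (\<Sum>m\<in>Poly_Mapping.keys q. of_int (Poly_Mapping.lookup q m) * monom m)"
  proof (rule sum.cong[OF refl])
    fix m assume "m \<in> Poly_Mapping.keys q"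
    then have "apart m + dl n = m" using keyx xa_decomp[of m] by (simp add: add.commute)
    then show "of_int (Poly_Mapping.lookup q m) * monom (apart m + dl n) = of_int (Poly_Mapping.lookup q m) * monom m"
      by simp
  qed
  also have "\<dots> = q" using poly_decomp[of q] by simp
  finally have aq: "a0 * pt n = q" .
  have laz: "in_Laz a0"
  proof -
    have "allkeys (\<lambda>x. \<forall>v\<in>Poly_Mapping.keys x. \<exists>i\<ge>1. v = A i) a0"
      unfolding a0_def
    proof (rule allkeys_sum)
      fix m assume m: "m \<in> Poly_Mapping.keys q"
      have okm: "\<forall>v\<in>Poly_Mapping.keys m. var_ok n v" using iq m unfolding in_ring_def by blast
      show "allkeys (\<lambda>x. \<forall>v\<in>Poly_Mapping.keys x. \<exists>i\<ge>1. v = A i) (of_int (Poly_Mapping.lookup q m) * monom (apart m))"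
        unfolding single_monom[symmetric]
      proof (rule allkeys_single, rule ballI)
        fix v assume v: "v \<in> Poly_Mapping.keys (apart m)"
        then have "\<not> isX v" "v \<in> Poly_Mapping.keys m" by (auto simp: in_keys_iff lookup_apart split: if_splits)
        then show "\<exists>i\<ge>1. v = A i" using okm by (cases v) (auto simp: isX_def var_ok_def)
      qed
    qed
    then show ?thesis by (simp add: allkeys_def in_Laz_def)
  qed
  have hom: "homog (l - int (n * (n - 1) div 2)) a0"
  proof -
    have "allkeys (\<lambda>x. wdeg x = l - int (n * (n - 1) div 2)) a0"
      unfolding a0_def
    proof (rule allkeys_sum)
      fix m assume m: "m \<in> Poly_Mapping.keys q"
      have wm: "wdeg m = l" using hq m unfolding homog_def by blast
      have "wdeg (apart m) = l - int (n * (n - 1) div 2)"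
        using wm wdeg_add[of "xpart m" "apart m"] xa_decomp[of m] keyx[OF m] wdeg_dl by simp
      then show "allkeys (\<lambda>x. wdeg x = l - int (n * (n - 1) div 2)) (of_int (Poly_Mapping.lookup q m) * monom (apart m))"
        unfolding single_monom[symmetric] by (rule allkeys_single)
    qed
    then show ?thesis by (simp add: homog_allkeys)
  qed
  show ?thesis using laz hom cq aq by blast
qed


end
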